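(* Let $b>0$ and let $F$ be as defined in the context. Then $F$ is strictly decreasing on $(x_\infty,x_0)$, $F\in C^\infty((x_\infty,x_0])$, and $$\lim_{x\downarrow x_\infty}F(x)=+\infty,\qquad \lim_{x\downarrow x_\infty}F'(x)=-\infty.$$
   Context: Constants: $a\in\mathbb{R}$, $b>0$, $\sigma>0$, $\rho>0$, $c>0$, $\alpha>0$. For $\beta<0$, let $D_\beta(x)=\frac{e^{-x^2/4}}{\Gamma(-\beta)}\int_0^\infty t^{-\beta-1}e^{-t^2/2-xt}\,dt$, and $\psi(x)=e^{\frac{(bx-a)^2}{2\sigma^2 b}}D_{-\rho/b}\big(-\frac{bx-a}{\sigma b}\sqrt{2b}\big)$, the positive strictly increasing fundamental solution of $\frac12\sigma^2u''+(a-bx)u'-\rho u=0$ (it satisfies $\psi''\psi-(\psi')^2>0$). Let $x_0$ (resp. $x_\infty$) be the unique solution on $(c,\infty)$ of $(x-c)\psi'(x)-\psi(x)=0$ (resp. $(x-c)\psi''(x)-\psi'(x)=0$); one has $c<x_\infty<x_0$. For $x\in(x_\infty,x_0]$ define $F(x)=\int_x^{x_0}\Theta(z)\,dz$ where $$\Theta(z)=\frac{\big[\psi'''(z)\big((z-c)\psi'(z)-\psi(z)\big)-\psi''(z)\big((z-c)\psi''(z)-\psi'(z)\big)\big]\psi(z)}{-\alpha\big[\psi''(z)\psi(z)-\psi'(z)^2\big]\big[(z-c)\psi''(z)-\psi'(z)\big]}.$$ *)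

theory Defs
  imports "HOL-Analysis.Analysis"
begin

text \<open>Parabolic cylinder function via its integral representation (for \<beta> < 0).\<close>
definition parab_D :: "real \<Rightarrow> real \<Rightarrow> real" where
  "parab_D \<beta> x = exp (- x\<^sup>2 / 4) / Gamma (- \<beta>) *
     integral {0<..} (\<lambda>t. t powr (- \<beta> - 1) * exp (- t\<^sup>2 / 2 - x * t))"

definition psi :: "real \<Rightarrow> real \<Rightarrow> real \<Rightarrow> real \<Rightarrow> real \<Rightarrow> real" where
  "psi a b \<sigma> \<rho> x = exp ((b * x - a)\<^sup>2 / (2 * \<sigma>\<^sup>2 * b)) *
     parab_D (- \<rho> / b) (- (b * x - a) / (\<sigma> * b) * sqrt (2 * b))"

definition psid :: "nat \<Rightarrow> real \<Rightarrow> real \<Rightarrow> real \<Rightarrow> real \<Rightarrow> real \<Rightarrow> real" where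
  "psid n a b \<sigma> \<rho> = (deriv ^^ n) (psi a b \<sigma> \<rho>)"

definition x0_pt :: "real \<Rightarrow> real \<Rightarrow> real \<Rightarrow> real \<Rightarrow> real \<Rightarrow> real" where
  "x0_pt a b \<sigma> \<rho> c = (THE x. c < x \<and>
     (x - c) * psid 1 a b \<sigma> \<rho> x - psid 0 a b \<sigma> \<rho> x = 0)"

definition xinf_pt :: "real \<Rightarrow> real \<Rightarrow> real \<Rightarrow> real \<Rightarrow> real \<Rightarrow> real" where
  "xinf_pt a b \<sigma> \<rho> c = (THE x. c < x \<and>
     (x - c) * psid 2 a b \<sigma> \<rho> x - psid 1 a b \<sigma> \<rho> x = 0)"

definition Theta :: "real \<Rightarrow> real \<Rightarrow> real \<Rightarrow> real \<Rightarrow> real \<Rightarrow> real \<Rightarrow> real \<Rightarrow> real" where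
  "Theta a b \<sigma> \<rho> c \<alpha> z =
     (let p0 = psid 0 a b \<sigma> \<rho> z; p1 = psid 1 a b \<sigma> \<rho> z;
          p2 = psid 2 a b \<sigma> \<rho> z; p3 = psid 3 a b \<sigma> \<rho> z in
      ((p3 * ((z - c) * p1 - p0) - p2 * ((z - c) * p2 - p1)) * p0) /
      (- \<alpha> * (p2 * p0 - p1\<^sup>2) * ((z - c) * p2 - p1)))"

text \<open>F(x) = \<integral>_x^{x0} \<Theta>(z) dz, meaningful for x in (x_inf, x0].\<close>
definition Ffun :: "real \<Rightarrow> real \<Rightarrow> real \<Rightarrow> real \<Rightarrow> real \<Rightarrow> real \<Rightarrow> real \<Rightarrow> real" where
  "Ffun a b \<sigma> \<rho> c \<alpha> x = integral {x..x0_pt a b \<sigma> \<rho> c} (Theta a b \<sigma> \<rho> c \<alpha>)"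

end

theory Submission
  imports Defs "HOL-Real_Asymp.Real_Asymp"
begin


primrec Ck :: "nat \<Rightarrow> real set \<Rightarrow> (real \<Rightarrow> real) \<Rightarrow> bool" where
  "Ck 0 S f = True"
| "Ck (Suc k) S f = ((\<forall>x\<in>S. f differentiable (at x)) \<and> Ck k S (deriv f))"

lemma deriv_eq_open:
  assumes "open S" "x \<in> S" "\<And>y. y \<in> S \<Longrightarrow> f y = g y"
  shows "deriv f x = deriv g x"
proof (rule deriv_cong_ev)
  show "\<forall>\<^sub>F y in nhds x. f y = g y"
    using assms eventually_nhds_in_open eventually_mono by (smt (verit))
qed simp

lemma Ck_cong:
  assumes "open S" "\<And>x. x \<in> S \<Longrightarrow> f x = g x" "Ck k S f"
  shows "Ck k S g"
  using assms
proof (induction k arbitrary: f g)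
  case 0
  then show ?case by simp
next
  case (Suc k)
  have d: "\<forall>x\<in>S. g differentiable (at x)"
  proof
    fix x assume x: "x \<in> S"
    then have "f differentiable (at x)" using Suc.prems by simp
    then obtain D where "(f has_real_derivative D) (at x)"
      using real_differentiable_def by blast
    then have "(g has_real_derivative D) (at x)"
      by (rule has_field_derivative_transform_within_open[OF _ \<open>open S\<close> x]) (use Suc.prems in auto)
    then show "g differentiable (at x)" using real_differentiable_def by blast
  qed
  have "Ck k S (deriv g)"
    by (rule Suc.IH[of "deriv f"]) (use Suc.prems deriv_eq_open[of S _ f g] in auto)
  then show ?case using d by simp
qed

lemma Ck_down: "Ck (Suc k) S f \<Longrightarrow> Ck k S f"
proof (induction k arbitrary: f)
  case 0
  then show ?case by simp
next
  case (Suc k)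
  then show ?case by simp
qed

lemma Ck_le: "Ck k S f \<Longrightarrow> m \<le> k \<Longrightarrow> Ck m S f"
proof (induction k arbitrary: m)
  case 0 then show ?case by simp
next
  case (Suc k)
  then show ?case using Ck_down by (metis le_Suc_eq)
qed

lemma Ck_const: "Ck k S (\<lambda>x. a)"
proof (induction k arbitrary: a)
  case 0 then show ?case by simp
next
  case (Suc k)
  have "deriv (\<lambda>x. a) = (\<lambda>x. 0)" by (rule ext) simp
  then show ?case using Suc by simp
qed

lemma Ck_id: "Ck k S (\<lambda>x. x)"
proof (cases k)
  case 0 then show ?thesis by simp
next
  case (Suc m)
  have "deriv (\<lambda>x::real. x) = (\<lambda>x. 1)" by (rule ext) simp
  then show ?thesis using Suc Ck_const by simp
qed

lemma Ck_add:
  assumes "open S" "Ck k S f" "Ck k S g"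
  shows "Ck k S (\<lambda>x. f x + g x)"
  using assms
proof (induction k arbitrary: f g)
  case 0 then show ?case by simp
next
  case (Suc k)
  have d: "\<forall>x\<in>S. (\<lambda>x. f x + g x) differentiable (at x)"
    using Suc.prems by (auto intro: differentiable_add)
  have e: "\<And>x. x \<in> S \<Longrightarrow> deriv f x + deriv g x = deriv (\<lambda>x. f x + g x) x"
  proof -
    fix x assume "x \<in> S"
    then have "f differentiable (at x)" "g differentiable (at x)" using Suc.prems by auto
    then have "((\<lambda>x. f x + g x) has_real_derivative deriv f x + deriv g x) (at x)"
      by (intro derivative_intros) (auto simp: DERIV_deriv_iff_real_differentiable)
    then show "deriv f x + deriv g x = deriv (\<lambda>x. f x + g x) x"
      by (simp add: DERIV_imp_deriv)
  qed
  have "Ck k S (\<lambda>x. deriv f x + deriv g x)"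
    using Suc by simp
  then have "Ck k S (deriv (\<lambda>x. f x + g x))"
    by (rule Ck_cong[OF \<open>open S\<close> e, rotated])
  then show ?case using d by simp
qed

lemma Ck_mult:
  assumes "open S" "Ck k S f" "Ck k S g"
  shows "Ck k S (\<lambda>x. f x * g x)"
  using assms
proof (induction k arbitrary: f g)
  case 0 then show ?case by simp
next
  case (Suc k)
  have d: "\<forall>x\<in>S. (\<lambda>x. f x * g x) differentiable (at x)"
    using Suc.prems by (auto intro: differentiable_mult)
  have e: "\<And>x. x \<in> S \<Longrightarrow> deriv f x * g x + f x * deriv g x = deriv (\<lambda>x. f x * g x) x"
  proof -
    fix x assume "x \<in> S"
    then have "f differentiable (at x)" "g differentiable (at x)" using Suc.prems by auto
    then have "((\<lambda>x. f x * g x) has_real_derivative f x * deriv g x + deriv f x * g x) (at x)"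
      by (intro DERIV_mult') (auto simp: DERIV_deriv_iff_real_differentiable)
    then show "deriv f x * g x + f x * deriv g x = deriv (\<lambda>x. f x * g x) x"
      by (simp add: DERIV_imp_deriv)
  qed
  have "Ck k S (\<lambda>x. deriv f x * g x + f x * deriv g x)"
    using Suc Ck_down Ck_add by simp
  then have "Ck k S (deriv (\<lambda>x. f x * g x))"
    by (rule Ck_cong[OF \<open>open S\<close> e, rotated])
  then show ?case using d by simp
qed

lemma Ck_inv:
  assumes "open S" "Ck k S f" "\<And>x. x \<in> S \<Longrightarrow> f x \<noteq> 0"
  shows "Ck k S (\<lambda>x. 1 / f x)"
  using assms
proof (induction k arbitrary: f)
  case 0 then show ?case by simp
next
  case (Suc k)
  have D: "((\<lambda>x. 1 / f x) has_real_derivative - deriv f x * (1 / f x) * (1 / f x)) (at x)"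
    if "x \<in> S" for x
  proof -
    have "f differentiable (at x)" "f x \<noteq> 0" using Suc.prems that by auto
    then have "((\<lambda>x. 1 / f x) has_real_derivative - (deriv f x / (f x)\<^sup>2)) (at x)"
      by (intro derivative_eq_intros) (auto simp: DERIV_deriv_iff_real_differentiable power2_eq_square field_simps)
    then show ?thesis by (simp add: power2_eq_square field_simps)
  qed
  have d: "\<forall>x\<in>S. (\<lambda>x. 1 / f x) differentiable (at x)"
    using D real_differentiable_def by blast
  have e: "- deriv f x * (1 / f x) * (1 / f x) = deriv (\<lambda>x. 1 / f x) x" if "x \<in> S" for x
    using DERIV_imp_deriv[OF D[OF that]] by simp
  have i: "Ck k S (\<lambda>x. 1 / f x)" using Suc Ck_down by blast
  have "Ck k S (\<lambda>x. - deriv f x * (1 / f x) * (1 / f x))"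
  proof -
    have "Ck k S (\<lambda>x. - 1 * deriv f x)" using Suc.prems Ck_mult[OF \<open>open S\<close> Ck_const[of k S "-1"], of "deriv f"] by simp
    then have "Ck k S (\<lambda>x. (- 1 * deriv f x) * (1 / f x))" using Ck_mult[OF \<open>open S\<close> _ i] by blast
    then have "Ck k S (\<lambda>x. ((- 1 * deriv f x) * (1 / f x)) * (1 / f x))" using Ck_mult[OF \<open>open S\<close> _ i] by blast
    then show ?thesis by simp
  qed
  then have "Ck k S (deriv (\<lambda>x. 1 / f x))"
    by (rule Ck_cong[OF \<open>open S\<close> e, rotated])
  then show ?case using d by simp
qed

lemma Ck_higher:
  assumes "Ck (Suc k) S f" "x \<in> S"
  shows "((deriv ^^ k) f) differentiable (at x)"
  using assms
proof (induction k arbitrary: f)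
  case 0 then show ?case by simp
next
  case (Suc k)
  have "Ck (Suc k) S (deriv f)" using Suc.prems by simp
  then have "((deriv ^^ k) (deriv f)) differentiable (at x)" using Suc by blast
  then show ?case by (simp add: funpow_Suc_right del: funpow.simps)
qed

lemma Ck_chain:
  assumes "\<And>n x. (f n has_real_derivative f (Suc n) x) (at x)"
  shows "Ck k S (f n)"
proof (induction k arbitrary: n)
  case 0 then show ?case by simp
next
  case (Suc k)
  have "deriv (f n) = f (Suc n)" using assms by (auto intro!: ext DERIV_imp_deriv)
  moreover have "\<forall>x\<in>S. f n differentiable (at x)" using assms real_differentiable_def by blast
  ultimately show ?case using Suc by simp
qed



locale psi_ctx =
  fixes f :: "nat \<Rightarrow> real \<Rightarrow> real" and c \<alpha> :: real
  assumes D: "\<And>n x. (f n has_real_derivative f (Suc n) x) (at x)"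
    and pos: "\<And>n x. f n x > 0"
    and lc: "\<And>x. f 2 x * f 0 x - (f 1 x)\<^sup>2 > 0"
    and cpos: "c > 0" and apos: "\<alpha> > 0"
begin

definition gn where "gn n z = (z - c) * f (Suc n) z - f n z"
definition r where "r n = (THE x. c < x \<and> gn n x = 0)"

lemma gn0: "gn 0 z = (z - c) * f 1 z - f 0 z" by (simp add: gn_def)
lemma gn1: "gn 1 z = (z - c) * f 2 z - f 1 z" by (simp add: gn_def numeral_2_eq_2)
lemma gn1S: "gn (Suc 0) z = (z - c) * f 2 z - f (Suc 0) z" by (simp add: gn_def numeral_2_eq_2)

lemma cont: "isCont (f n) x" using D DERIV_isCont by blast
lemma cont_on: "continuous_on S (f n)" using cont continuous_at_imp_continuous_on by blast

lemma mono_f: "x < y \<Longrightarrow> f n x < f n y"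
  by (rule DERIV_pos_imp_increasing) (use D pos in blast)+

lemma mono_f_le: "x \<le> y \<Longrightarrow> f n x \<le> f n y"
  using mono_f by (cases "x = y") (auto simp: less_imp_le)

lemma gn_D: "(gn n has_real_derivative (z - c) * f (Suc (Suc n)) z) (at z)"
proof -
  have h1: "((\<lambda>z. z - c) has_real_derivative 1 - 0) (at z)" by (intro DERIV_diff DERIV_ident DERIV_const)
  note h3 = DERIV_diff[OF DERIV_mult'[OF h1 D[of "Suc n" z]] D[of n z]]
  then show ?thesis unfolding gn_def[abs_def] by simp
qed

lemma gn_cont: "isCont (gn n) z" using gn_D DERIV_isCont by blast

lemma gn_mono: assumes "c \<le> x" "x < y" shows "gn n x < gn n y"
proof (rule DERIV_pos_imp_increasing_open[OF \<open>x < y\<close>])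
  fix t assume "x < t" "t < y"
  then show "\<exists>y. (gn n has_real_derivative y) (at t) \<and> 0 < y"
    using gn_D pos assms by (intro exI[of _ "(t - c) * f (Suc (Suc n)) t"]) auto
next
  show "continuous_on {x..y} (gn n)" using gn_cont continuous_at_imp_continuous_on by blast
qed

lemma gn_c: "gn n c < 0" using pos by (simp add: gn_def)

lemma gn_exists: "\<exists>z>c. gn n z = 0"
proof -
  define A where "A = f n c"
  define Bc where "Bc = f (Suc (Suc n)) c"
  have A: "A > 0" and B: "Bc > 0" using pos by (auto simp: A_def Bc_def)
  define E where "E z = gn n z + A - Bc * (z - c)\<^sup>2 / 2" for z
  define z1 where "z1 = c + 1 + 2 * A / Bc"
  have "2 * A / Bc > 0" using A B by simp
  then have z1: "z1 > c" by (simp add: z1_def)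
  have "E c \<le> E z1"
  proof (rule DERIV_nonneg_imp_nondecreasing[of c z1 E])
    show "c \<le> z1" using z1 by simp
    fix x assume x: "c \<le> x" "x \<le> z1"
    note e1 = DERIV_add[OF gn_D[of n x] DERIV_const[of A "at x"]]
    have e2: "((\<lambda>z. Bc * (z - c)\<^sup>2 / 2) has_real_derivative Bc * (x - c)) (at x)"
      by (auto intro!: derivative_eq_intros)
    note e3 = DERIV_diff[OF e1 e2]
    have "(E has_real_derivative (x - c) * (f (Suc (Suc n)) x - Bc)) (at x)"
      using e3 unfolding E_def[abs_def] by (simp add: algebra_simps)
    moreover have "0 \<le> (x - c) * (f (Suc (Suc n)) x - Bc)"
      using x mono_f_le[of c x "Suc (Suc n)"] by (simp add: Bc_def)
    ultimately show "\<exists>y. (E has_real_derivative y) (at x) \<and> 0 \<le> y" by metis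
  qed
  then have "gn n z1 \<ge> Bc * (z1 - c)\<^sup>2 / 2 - A"
    using gn_c by (simp add: E_def gn_def A_def)
  moreover have "Bc * (z1 - c)\<^sup>2 / 2 > A"
  proof -
    have s1: "z1 - c \<ge> 1" using A B by (simp add: z1_def)
    have s2: "z1 - c > 2 * A / Bc" using A B by (simp add: z1_def)
    have "(z1 - c)\<^sup>2 \<ge> z1 - c" using s1 by (simp add: power2_eq_square)
    then have "Bc * (z1 - c)\<^sup>2 \<ge> Bc * (z1 - c)" using B by simp
    moreover have "Bc * (z1 - c) > 2 * A" using s2 B by (simp add: field_simps)
    ultimately show ?thesis by simp
  qed
  ultimately have "gn n z1 > 0" by simp
  then obtain z where z: "z \<ge> c" "z \<le> z1" "gn n z = 0"
    using IVT[of "gn n" c 0 z1] gn_c z1 gn_cont by (auto simp: less_imp_le)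
  then have "z \<noteq> c" using gn_c[of n] by (metis less_irrefl)
  then have "c < z" using z(1) by simp
  then show ?thesis using z(3) by blast
qed

lemma r_prop: "c < r n \<and> gn n (r n) = 0"
proof -
  have "\<exists>!x. c < x \<and> gn n x = 0"
  proof (rule ex_ex1I)
    show "\<exists>x. c < x \<and> gn n x = 0" using gn_exists by blast
  next
    fix x y assume "c < x \<and> gn n x = 0" "c < y \<and> gn n y = 0"
    then show "x = y" using gn_mono[of x y n] gn_mono[of y x n]
      by (cases x y rule: linorder_cases) auto
  qed
  then show ?thesis unfolding r_def by (rule theI')
qed

lemma r_gt: "c < r n" using r_prop by blast
lemma gn_r: "gn n (r n) = 0" using r_prop by blast

lemma gn_neg: "c \<le> z \<Longrightarrow> z < r n \<Longrightarrow> gn n z < 0"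
  using gn_mono[of z "r n" n] gn_r by simp
lemma gn_le: "c \<le> z \<Longrightarrow> z \<le> r n \<Longrightarrow> gn n z \<le> 0"
  using gn_neg gn_r by (cases "z = r n") (auto simp: less_imp_le)
lemma gn_pos: "r n < z \<Longrightarrow> gn n z > 0"
  using gn_mono[of "r n" z n] gn_r r_gt by (simp add: less_imp_le)
lemma gn_ge: "r n \<le> z \<Longrightarrow> gn n z \<ge> 0"
  using gn_pos gn_r by (cases "z = r n") (auto simp: less_imp_le)

lemma r_order: "r 1 < r 0"
proof (rule ccontr)
  assume "\<not> r 1 < r 0"
  then have le: "r 0 \<le> r 1" by simp
  define x where "x = r 1"
  have "gn 1 x = 0" using gn_r x_def by simp
  then have e: "(x - c) * f 2 x = f 1 x" by (simp add: gn1 gn1S)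
  have "f 2 x * gn 0 x = (x - c) * f 2 x * f 1 x - f 2 x * f 0 x"
    by (simp add: gn0 algebra_simps)
  also have "\<dots> = - (f 2 x * f 0 x - (f 1 x)\<^sup>2)" using e by (simp add: power2_eq_square)
  finally have "f 2 x * gn 0 x < 0" using lc[of x] by simp
  then have "gn 0 x < 0" using pos[of 2 x] by (simp add: mult_less_0_iff)
  moreover have "gn 0 x \<ge> 0" using gn_ge[of 0 x] le x_def by simp
  ultimately show False by simp
qed

abbreviation "xi \<equiv> r 1"
abbreviation "xo \<equiv> r 0"

definition Th where "Th z = ((f 3 z * ((z - c) * f 1 z - f 0 z) - f 2 z * ((z - c) * f 2 z - f 1 z)) * f 0 z) /
      (- \<alpha> * (f 2 z * f 0 z - (f 1 z)\<^sup>2) * ((z - c) * f 2 z - f 1 z))"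

lemma xi_gt: "c < xi" using r_gt by blast

lemma den_ne: "xi < z \<Longrightarrow> - \<alpha> * (f 2 z * f 0 z - f 1 z * f 1 z) * ((z - c) * f 2 z - f 1 z) \<noteq> 0"
  using apos lc[of z] gn_pos[of 1 z] by (simp add: gn1 gn1S power2_eq_square)

lemma Th_Ck:
  assumes "open S" "S \<subseteq> {xi<..}"
  shows "Ck k S Th"
proof -
  have fk: "Ck k S (f n)" for n by (rule Ck_chain) (rule D)
  have diff: "Ck k S (\<lambda>x. u x - v x)" if "Ck k S u" "Ck k S v" for u v
  proof -
    have "Ck k S (\<lambda>x. u x + (-1) * v x)"
      using Ck_add[OF \<open>open S\<close> that(1) Ck_mult[OF \<open>open S\<close> Ck_const that(2)]] .
    then show ?thesis by simp
  qed
  have zc: "Ck k S (\<lambda>z. z - c)" using diff[OF Ck_id Ck_const] .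
  have num: "Ck k S (\<lambda>z. (f 3 z * ((z - c) * f 1 z - f 0 z) - f 2 z * ((z - c) * f 2 z - f 1 z)) * f 0 z)"
    by (intro Ck_mult[OF \<open>open S\<close>] diff fk zc)
  have den: "Ck k S (\<lambda>z. 1 / (- \<alpha> * (f 2 z * f 0 z - f 1 z * f 1 z) * ((z - c) * f 2 z - f 1 z)))"
    by (intro Ck_inv[OF \<open>open S\<close>] Ck_mult[OF \<open>open S\<close>] diff fk zc Ck_const)
       (use den_ne assms(2) in auto)
  have "Ck k S (\<lambda>z. (f 3 z * ((z - c) * f 1 z - f 0 z) - f 2 z * ((z - c) * f 2 z - f 1 z)) * f 0 z *
      (1 / (- \<alpha> * (f 2 z * f 0 z - f 1 z * f 1 z) * ((z - c) * f 2 z - f 1 z))))"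
    using Ck_mult[OF \<open>open S\<close> num den] .
  moreover have "(\<lambda>z. (f 3 z * ((z - c) * f 1 z - f 0 z) - f 2 z * ((z - c) * f 2 z - f 1 z)) * f 0 z *
      (1 / (- \<alpha> * (f 2 z * f 0 z - f 1 z * f 1 z) * ((z - c) * f 2 z - f 1 z)))) = Th"
    by (rule ext) (simp add: Th_def power2_eq_square)
  ultimately show ?thesis by simp
qed

lemma Th_cont: "xi < z \<Longrightarrow> isCont Th z"
proof -
  assume z: "xi < z"
  have "Ck (Suc 0) {xi<..} Th" by (rule Th_Ck) auto
  then have "Th differentiable (at z)" using z by simp
  then show "isCont Th z" by (rule differentiable_imp_continuous_within)
qed

lemma Th_cont_on: "S \<subseteq> {xi<..} \<Longrightarrow> continuous_on S Th"
  using Th_cont continuous_at_imp_continuous_on by blast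

lemma Th_pos: assumes "xi < z" "z \<le> xo" shows "Th z > 0"
proof -
  have g0: "gn 0 z \<le> 0" using gn_le[of z 0] assms xi_gt by simp
  have g1: "gn 1 z > 0" using gn_pos[of 1 z] assms by simp
  have "f 3 z * gn 0 z \<le> 0" using g0 pos[of 3 z] by (simp add: mult_nonneg_nonpos)
  moreover have "f 2 z * gn 1 z > 0" using g1 pos[of 2 z] by simp
  ultimately have "(f 3 z * gn 0 z - f 2 z * gn 1 z) * f 0 z < 0"
    using pos[of 0 z] by (simp add: mult_neg_pos)
  moreover have "- \<alpha> * (f 2 z * f 0 z - (f 1 z)\<^sup>2) * gn 1 z < 0"
    using apos lc[of z] g1 by (simp add: mult_neg_pos mult_pos_pos)
  ultimately show ?thesis unfolding Th_def by (simp add: gn0 gn1 gn1S divide_neg_pos)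
qed

end


lemma lim_ln_aux: "(K::real) > 0 \<Longrightarrow> filterlim (\<lambda>x::real. K * (C - ln (x - a))) at_top (at_right a)"
  by real_asymp

lemma lim_inv_aux: "(K::real) > 0 \<Longrightarrow> filterlim (\<lambda>x::real. - (K / (x - a))) at_bot (at_right a)"
  by real_asymp

context psi_ctx begin

definition Bd where "Bd = xo + 1"
definition G where "G x = integral {x..Bd} Th - integral {xo..Bd} Th"
definition Fn where "Fn x = integral {x..xo} Th"

lemma xo_gt_xi: "xi < xo" using r_order by simp

lemma G_D: assumes "x \<in> {xi<..<Bd}" shows "(G has_real_derivative - Th x) (at x)"
proof -
  define a' where "a' = (xi + x) / 2"
  have a': "xi < a'" "a' < x" "x < Bd" using assms by (auto simp: a'_def)
  have co: "continuous_on {a'..Bd} Th" by (rule Th_cont_on) (use a' in auto)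
  have "((\<lambda>y. integral {y..Bd} Th) has_real_derivative - Th x) (at x within {a'..Bd})"
    by (rule integral_has_real_derivative'[OF co]) (use a' in auto)
  moreover have "at x within {a'..Bd} = at x" by (rule at_within_interior) (use a' in simp)
  ultimately have "((\<lambda>y. integral {y..Bd} Th) has_real_derivative - Th x) (at x)" by simp
  from DERIV_diff[OF this DERIV_const[of "integral {xo..Bd} Th" "at x"]]
  show ?thesis unfolding G_def[abs_def] by simp
qed

lemma F_G: assumes "xi < x" "x \<le> xo" shows "Fn x = G x"
proof -
  have "Th integrable_on {x..Bd}"
    by (rule integrable_continuous_interval, rule Th_cont_on) (use assms in auto)
  from Henstock_Kurzweil_Integration.integral_combine[OF assms(2) _ this]
  have "integral {x..xo} Th + integral {xo..Bd} Th = integral {x..Bd} Th" by (simp add: Bd_def)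
  then show ?thesis unfolding Fn_def G_def by simp
qed

lemma G_Ck: "Ck k {xi<..<Bd} G"
proof (cases k)
  case 0 then show ?thesis by simp
next
  case (Suc m)
  have op: "open {xi<..<Bd}" by simp
  have d: "\<forall>x\<in>{xi<..<Bd}. G differentiable (at x)" using G_D real_differentiable_def by blast
  have e: "- 1 * Th x = deriv G x" if "x \<in> {xi<..<Bd}" for x
    using DERIV_imp_deriv[OF G_D[OF that]] by simp
  have "Ck m {xi<..<Bd} (\<lambda>x. - 1 * Th x)"
    by (rule Ck_mult[OF op Ck_const Th_Ck[OF op]]) auto
  then have "Ck m {xi<..<Bd} (deriv G)" by (rule Ck_cong[OF op e, rotated])
  then show ?thesis using d Suc by simp
qed

lemma Th_bound: "\<exists>K>0. \<forall>z. xi < z \<and> z \<le> xo \<longrightarrow> K / (z - xi) \<le> Th z"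
proof -
  define Np where "Np z = (f 2 z * gn 1 z - f 3 z * gn 0 z) * f 0 z" for z
  define P where "P z = f 2 z * f 0 z - (f 1 z)\<^sup>2" for z
  have Th_eq: "Th z = Np z / (\<alpha> * P z * gn 1 z)" for z
  proof -
    have 1: "Np z = - ((f 3 z * ((z - c) * f 1 z - f 0 z) - f 2 z * ((z - c) * f 2 z - f 1 z)) * f 0 z)"
      by (simp add: Np_def gn0 gn1 gn1S algebra_simps)
    have 2: "\<alpha> * P z * gn 1 z = - (- \<alpha> * (f 2 z * f 0 z - (f 1 z)\<^sup>2) * ((z - c) * f 2 z - f 1 z))"
      by (simp add: P_def gn1 gn1S)
    show ?thesis unfolding 1 2 Th_def minus_divide_divide ..
  qed
  have Npc: "continuous_on {xi..xo} Np"
    unfolding Np_def[abs_def]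
    by (intro continuous_at_imp_continuous_on ballI continuous_intros cont gn_cont)
  have Nppos: "Np z > 0" if "z \<in> {xi..xo}" for z
  proof (cases "z = xi")
    case True
    have "gn 0 z < 0" using gn_neg[of z 0] True xi_gt xo_gt_xi by simp
    moreover have "gn 1 z = 0" using True gn_r by simp
    moreover have "f 3 z * gn 0 z < 0" using \<open>gn 0 z < 0\<close> pos[of 3 z] by (simp add: mult_pos_neg)
    ultimately show ?thesis using pos[of 0 z] by (simp add: Np_def mult_neg_pos)
  next
    case False
    then have z: "xi < z" "z \<le> xo" using that by auto
    have "gn 0 z \<le> 0" using gn_le[of z 0] z xi_gt by simp
    then have "f 3 z * gn 0 z \<le> 0" using pos[of 3 z] by (simp add: mult_nonneg_nonpos)
    moreover have "f 2 z * gn 1 z > 0" using gn_pos[of 1 z] z pos[of 2 z] by simp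
    ultimately show ?thesis using pos[of 0 z] by (simp add: Np_def)
  qed
  obtain zm where zm: "zm \<in> {xi..xo}" "\<And>y. y \<in> {xi..xo} \<Longrightarrow> Np zm \<le> Np y"
    using continuous_attains_inf[OF compact_Icc _ Npc] xo_gt_xi by auto
  define m where "m = Np zm"
  have m: "m > 0" using Nppos zm by (simp add: m_def)
  define Pm where "Pm = f 2 xo * f 0 xo"
  have Pm: "Pm > 0" using pos by (simp add: Pm_def)
  define M where "M = (xo - c) * f 3 xo"
  have M: "M > 0" using pos[of 3 xo] r_gt[of 0] by (simp add: M_def)
  define K where "K = m / (\<alpha> * Pm * M)"
  have K: "K > 0" using m Pm M apos by (simp add: K_def)
  have "\<forall>z. xi < z \<and> z \<le> xo \<longrightarrow> K / (z - xi) \<le> Th z"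
  proof (intro allI impI)
    fix z assume z: "xi < z \<and> z \<le> xo"
    have Pz: "0 < P z" "P z \<le> Pm"
    proof -
      show "0 < P z" using lc[of z] by (simp add: P_def)
      have "f 2 z * f 0 z \<le> f 2 xo * f 0 xo"
        using z mono_f_le[of z xo 2] mono_f_le[of z xo 0] pos[of 2 z] pos[of 0 z]
        by (intro mult_mono) (auto simp: less_imp_le)
      moreover have "(f 1 z)\<^sup>2 \<ge> 0" by simp
      ultimately show "P z \<le> Pm" unfolding P_def Pm_def by linarith
    qed
    have hz: "0 < gn 1 z" using gn_pos[of 1 z] z by simp
    have hM: "gn 1 z \<le> M * (z - xi)"
    proof -
      have "\<And>t. xi \<le> t \<Longrightarrow> t \<le> z \<Longrightarrow> (gn 1 has_real_derivative (t - c) * f 3 t) (at t)"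
        using gn_D[of 1] by (simp add: numeral_3_eq_3)
      from MVT2[of xi z "gn 1" "\<lambda>t. (t - c) * f 3 t", OF _ this]
      obtain t where t: "xi < t" "t < z" "gn 1 z - gn 1 xi = (z - xi) * ((t - c) * f 3 t)"
        using z by auto
      have "(t - c) * f 3 t \<le> (xo - c) * f 3 xo"
        using t z xi_gt mono_f_le[of t xo 3] pos[of 3 t] by (intro mult_mono) auto
      then have "(z - xi) * ((t - c) * f 3 t) \<le> (z - xi) * M"
        using z by (intro mult_left_mono) (auto simp: M_def)
      then show ?thesis using t gn_r[of 1] by (simp add: mult.commute)
    qed
    have "\<alpha> * P z * gn 1 z \<le> \<alpha> * Pm * (M * (z - xi))"
      using Pz hz hM apos by (simp add: mult_mono mult_left_mono mult.assoc)
    then have "m / (\<alpha> * Pm * (M * (z - xi))) \<le> Np z / (\<alpha> * P z * gn 1 z)"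
      using zm(2)[of z] z Nppos[of z] Pz hz apos
      by (intro frac_le) (auto simp: m_def less_imp_le)
    moreover have "K / (z - xi) = m / (\<alpha> * Pm * (M * (z - xi)))"
      by (simp add: K_def)
    ultimately show "K / (z - xi) \<le> Th z" by (simp add: Th_eq)
  qed
  then show ?thesis using K by blast
qed

theorem main_loc:
  "(\<forall>x y. xi < x \<longrightarrow> x < y \<longrightarrow> y < xo \<longrightarrow> Fn y < Fn x) \<and>
   (\<exists>Fd :: nat \<Rightarrow> real \<Rightarrow> real. Fd 0 = Fn \<and>
      (\<forall>n. \<forall>x\<in>{xi<..xo}. (Fd n has_real_derivative Fd (Suc n) x) (at x within {xi<..xo}))) \<and>
   filterlim Fn at_top (at_right xi) \<and>
   filterlim (deriv Fn) at_bot (at_right xi)"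
proof (intro conjI)
  show "\<forall>x y. xi < x \<longrightarrow> x < y \<longrightarrow> y < xo \<longrightarrow> Fn y < Fn x"
  proof (intro allI impI)
    fix x y assume xy: "xi < x" "x < y" "y < xo"
    have "G y < G x"
    proof (rule DERIV_neg_imp_decreasing[OF xy(2)])
      fix t assume t: "x \<le> t" "t \<le> y"
      then have "t \<in> {xi<..<Bd}" using xy by (auto simp: Bd_def)
      then have "(G has_real_derivative - Th t) (at t)" by (rule G_D)
      moreover have "Th t > 0" using Th_pos[of t] t xy by simp
      ultimately show "\<exists>y. (G has_real_derivative y) (at t) \<and> y < 0"
        by (intro exI[of _ "- Th t"]) simp
    qed
    then show "Fn y < Fn x" using F_G xy by simp
  qed
next
  define Fd where "Fd n = (if n = 0 then Fn else (deriv ^^ n) G)" for n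
  have dn: "((deriv ^^ n) G has_real_derivative (deriv ^^ Suc n) G x) (at x)"
    if "x \<in> {xi<..xo}" for n x
  proof -
    have "x \<in> {xi<..<Bd}" using that by (auto simp: Bd_def)
    from Ck_higher[OF G_Ck[of "Suc n"] this]
    have "((deriv ^^ n) G has_real_derivative deriv ((deriv ^^ n) G) x) (at x)"
      by (simp add: DERIV_deriv_iff_real_differentiable)
    then show ?thesis by simp
  qed
  have "\<forall>n. \<forall>x\<in>{xi<..xo}. (Fd n has_real_derivative Fd (Suc n) x) (at x within {xi<..xo})"
  proof (intro allI ballI)
    fix n x assume x: "x \<in> {xi<..xo}"
    show "(Fd n has_real_derivative Fd (Suc n) x) (at x within {xi<..xo})"
    proof (cases "n = 0")
      case True
      have "(G has_real_derivative (deriv ^^ Suc 0) G x) (at x within {xi<..xo})"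
        using dn[OF x, of 0] by (simp add: has_field_derivative_at_within)
      then have "(Fn has_real_derivative (deriv ^^ Suc 0) G x) (at x within {xi<..xo})"
        by (rule has_field_derivative_transform_within[of _ _ _ _ 1]) (use x F_G in auto)
      then show ?thesis using True by (simp add: Fd_def)
    next
      case False
      then show ?thesis using dn[OF x, of n] by (simp add: Fd_def has_field_derivative_at_within)
    qed
  qed
  moreover have "Fd 0 = Fn" by (simp add: Fd_def)
  ultimately show "\<exists>Fd :: nat \<Rightarrow> real \<Rightarrow> real. Fd 0 = Fn \<and>
      (\<forall>n. \<forall>x\<in>{xi<..xo}. (Fd n has_real_derivative Fd (Suc n) x) (at x within {xi<..xo}))"
    by blast
next
  obtain K where K: "K > 0" "\<And>z. xi < z \<Longrightarrow> z \<le> xo \<Longrightarrow> K / (z - xi) \<le> Th z"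
    using Th_bound by blast
  have L: "filterlim (\<lambda>x. K * (ln (xo - xi) - ln (x - xi))) at_top (at_right xi)"
    using K(1) by (rule lim_ln_aux)
  have "\<forall>\<^sub>F x in at_right xi. K * (ln (xo - xi) - ln (x - xi)) \<le> Fn x"
    using eventually_at_right_real[OF xo_gt_xi]
  proof (rule eventually_mono)
    fix x assume x: "x \<in> {xi<..<xo}"
    have I: "((\<lambda>z. K / (z - xi)) has_integral (K * ln (xo - xi) - K * ln (x - xi))) {x..xo}"
    proof (rule fundamental_theorem_of_calculus[of x xo "\<lambda>z. K * ln (z - xi)"])
      show "x \<le> xo" using x by simp
      fix z assume z: "z \<in> {x..xo}"
      then have "z - xi > 0" using x by auto
      then have "((\<lambda>z. K * ln (z - xi)) has_real_derivative K / (z - xi)) (at z)"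
        by (auto intro!: derivative_eq_intros simp: field_simps)
      then show "((\<lambda>z. K * ln (z - xi)) has_vector_derivative K / (z - xi)) (at z within {x..xo})"
        by (simp add: has_real_derivative_iff_has_vector_derivative[symmetric] has_field_derivative_at_within)
    qed
    have Ti: "Th integrable_on {x..xo}"
      by (rule integrable_continuous_interval, rule Th_cont_on) (use x in auto)
    have "integral {x..xo} (\<lambda>z. K / (z - xi)) \<le> integral {x..xo} Th"
      by (rule integral_le[OF has_integral_integrable[OF I] Ti]) (use x K in auto)
    then show "K * (ln (xo - xi) - ln (x - xi)) \<le> Fn x"
      using integral_unique[OF I] by (simp add: Fn_def algebra_simps)
  qed
  then show "filterlim Fn at_top (at_right xi)" by (rule filterlim_at_top_mono[OF L])
next
  obtain K where K: "K > 0" "\<And>z. xi < z \<Longrightarrow> z \<le> xo \<Longrightarrow> K / (z - xi) \<le> Th z"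
    using Th_bound by blast
  have L: "filterlim (\<lambda>x. - (K / (x - xi))) at_bot (at_right xi)"
    using K(1) by (rule lim_inv_aux)
  have "\<forall>\<^sub>F x in at_right xi. deriv Fn x \<le> - (K / (x - xi))"
    using eventually_at_right_real[OF xo_gt_xi]
  proof (rule eventually_mono)
    fix x assume x: "x \<in> {xi<..<xo}"
    have "deriv Fn x = deriv G x"
      by (rule deriv_eq_open[of "{xi<..<xo}"]) (use x F_G in auto)
    also have "\<dots> = - Th x"
      by (rule DERIV_imp_deriv[OF G_D]) (use x in \<open>auto simp: Bd_def\<close>)
    finally show "deriv Fn x \<le> - (K / (x - xi))" using K(2)[of x] x by simp
  qed
  then show "filterlim (deriv Fn) at_bot (at_right xi)" by (rule filterlim_at_bot_mono[OF L])
qed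

end


definition Jf :: "real \<Rightarrow> nat \<Rightarrow> real \<Rightarrow> real" where
  "Jf p n v = integral {0<..} (\<lambda>t. t powr (p + real n) * exp (- t\<^sup>2 / 2 + v * t))"

lemma w_integrable:
  fixes r w :: real
  assumes r: "r > -1"
  shows "(\<lambda>t. t powr r * exp (- t\<^sup>2 / 2 + w * t)) integrable_on {0<..}"
proof -
  define C where "C = exp ((w + 1)\<^sup>2 / 2)"
  have "((\<lambda>t. t powr (r + 1 - 1) / exp t) has_integral Gamma (r + 1)) {0..}"
    by (rule Gamma_integral_real) (use r in simp)
  then have "(\<lambda>t. t powr r / exp t) integrable_on {0..}" by (auto simp: integrable_on_def)
  then have g0: "(\<lambda>t. t powr r / exp t) integrable_on {0<..}"
    by (rule integrable_spike_set) (auto intro: negligible_subset[OF negligible_sing[of 0]])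
  have g: "(\<lambda>t. C * (t powr r / exp t)) integrable_on {0<..}"
    using integrable_on_cmult_left[OF g0, of C] by simp
  show ?thesis
  proof (rule measurable_bounded_by_integrable_imp_integrable_real[OF _ g])
    show "(\<lambda>t. t powr r * exp (- t\<^sup>2 / 2 + w * t)) \<in> borel_measurable (lebesgue_on {0<..})"
      by (rule continuous_imp_measurable_on_sets_lebesgue) (auto intro!: continuous_intros)
    show "{0::real<..} \<in> sets lebesgue" by simp
    fix t :: real assume t: "t \<in> {0<..}"
    have e: "(w + 1)\<^sup>2 / 2 - t - (- t\<^sup>2 / 2 + w * t) = (t - (w + 1))\<^sup>2 / 2"
      by (simp add: power2_eq_square algebra_simps)
    have "- t\<^sup>2 / 2 + w * t \<le> (w + 1)\<^sup>2 / 2 - t"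
      using e by (smt (verit) zero_le_power2 divide_nonneg_pos)
    then have "exp (- t\<^sup>2 / 2 + w * t) \<le> exp ((w + 1)\<^sup>2 / 2 - t)" by simp
    also have "\<dots> = C / exp t" by (simp add: C_def exp_diff)
    finally have "t powr r * exp (- t\<^sup>2 / 2 + w * t) \<le> t powr r * (C / exp t)"
      by (intro mult_left_mono) auto
    then show "\<bar>t powr r * exp (- t\<^sup>2 / 2 + w * t)\<bar> \<le> C * (t powr r / exp t)"
      by (simp add: mult.commute mult.left_commute)
  qed
qed

lemma exp_sub_one_bound: fixes x :: real shows "\<bar>exp x - 1\<bar> \<le> \<bar>x\<bar> * exp \<bar>x\<bar>"
proof (cases "x \<ge> 0")
  case True
  have "1 - x \<le> exp (- x)" using exp_ge_add_one_self[of "-x"] by simp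
  then have "(1 - x) * exp x \<le> exp (- x) * exp x" by (intro mult_right_mono) auto
  then have "(1 - x) * exp x \<le> 1" by (simp add: exp_minus field_simps)
  then have "exp x - 1 \<le> x * exp x" by (simp add: algebra_simps)
  moreover have "exp x \<ge> 1" using True by simp
  ultimately show ?thesis using True by simp
next
  case False
  have "1 + x \<le> exp x" by (rule exp_ge_add_one_self)
  moreover have "exp x \<le> 1" using False by simp
  moreover have "exp (- x) \<ge> 1" using False by simp
  moreover have "x * exp (- x) \<le> x"
    using mult_left_mono_neg[of 1 "exp (- x)" x] False \<open>exp (- x) \<ge> 1\<close> by simp
  ultimately have "1 - exp x \<le> - (x * exp (- x))" by linarith
  then show ?thesis using False \<open>exp x \<le> 1\<close> by simp
qed

lemma quot_lim:
  fixes t :: real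
  assumes "X \<longlonglongrightarrow> 0" "\<And>i. X i \<noteq> 0"
  shows "(\<lambda>i. (exp (X i * t) - 1) / X i) \<longlonglongrightarrow> t"
proof -
  have "((\<lambda>h. exp (h * t)) has_real_derivative t) (at 0)"
    by (auto intro!: derivative_eq_intros)
  then have "((\<lambda>y. (exp (y * t) - exp (0 * t)) / (y - 0)) \<longlongrightarrow> t) (at 0)"
    by (simp add: has_field_derivative_iff)
  then have "((\<lambda>y. (exp (y * t) - exp (0 * t)) / (y - 0)) \<circ> X) \<longlonglongrightarrow> t"
    using assms tendsto_at_iff_sequentially[of _ t 0 UNIV] by auto
  then show ?thesis by (simp add: o_def)
qed

lemma Jf_deriv:
  assumes p: "p > -1"
  shows "(Jf p n has_real_derivative Jf p (Suc n) v) (at v)"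
proof -
  define q where "q = p + real n"
  have q: "q > -1" using p by (simp add: q_def)
  define w where "w u t = t powr q * exp (- t\<^sup>2 / 2 + u * t)" for u t :: real
  define g where "g t = t powr (p + real (Suc n)) * exp (- t\<^sup>2 / 2 + v * t)" for t :: real
  have Jw: "Jf p n u = integral {0<..} (w u)" for u by (simp add: Jf_def w_def[abs_def] q_def)
  have Jg: "Jf p (Suc n) v = integral {0<..} g" by (simp add: Jf_def g_def[abs_def])
  have wi: "(w u has_integral Jf p n u) {0<..}" for u
    unfolding Jw w_def by (rule integrable_integral[OF w_integrable[OF q]])
  have "((\<lambda>y. (Jf p n y - Jf p n v) / (y - v)) \<longlongrightarrow> Jf p (Suc n) v) (at v)"
    unfolding tendsto_at_iff_sequentially[where s=UNIV]
  proof (intro allI impI)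
    fix X :: "nat \<Rightarrow> real" assume X: "\<forall>i. X i \<in> UNIV - {v}" "X \<longlonglongrightarrow> v"
    define h where "h i = X i - v" for i
    have h0: "h \<longlonglongrightarrow> 0" using tendsto_diff[OF X(2) tendsto_const[of v]] by (simp add: h_def[abs_def])
    have hne: "h i \<noteq> 0" for i using X(1) by (auto simp: h_def)
    obtain Bd where Bd: "Bd > 0" "\<And>i. \<bar>h i\<bar> \<le> Bd"
      using convergent_imp_Bseq[OF convergentI[OF h0]] by (auto elim!: BseqE)
    define fk where "fk i t = (w (X i) t - w v t) / (X i - v)" for i t
    define dom where "dom t = t powr (q + 1) * exp (- t\<^sup>2 / 2 + (v + Bd) * t)" for t :: real
    have fk_eq: "fk i t = w v t * ((exp (h i * t) - 1) / h i)" for i t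
    proof -
      have "exp (- t\<^sup>2 / 2 + X i * t) = exp (- t\<^sup>2 / 2 + v * t) * exp (h i * t)"
        by (simp add: h_def algebra_simps exp_add[symmetric])
      then show ?thesis by (simp add: fk_def w_def h_def algebra_simps diff_divide_distrib)
    qed
    have fk_int: "(fk i has_integral (Jf p n (X i) - Jf p n v) / (X i - v)) {0<..}" for i
      unfolding fk_def[abs_def] by (intro has_integral_divide has_integral_diff wi)
    have dom_int: "dom integrable_on {0<..}"
      unfolding dom_def using w_integrable[of "q + 1" "v + Bd"] q by simp
    have bound: "norm (fk i t) \<le> dom t" if t: "t \<in> {0<..}" for i t
    proof -
      have t0: "t > 0" using t by simp
      have "\<bar>exp (h i * t) - 1\<bar> \<le> \<bar>h i * t\<bar> * exp \<bar>h i * t\<bar>" by (rule exp_sub_one_bound)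
      also have "\<dots> \<le> \<bar>h i\<bar> * t * exp (Bd * t)"
        using t0 Bd(2)[of i] by (auto simp: abs_mult intro!: mult_left_mono)
      finally have "\<bar>(exp (h i * t) - 1) / h i\<bar> \<le> t * exp (Bd * t)"
        using hne[of i] by (simp add: abs_divide divide_le_eq algebra_simps)
      then have "\<bar>w v t\<bar> * \<bar>(exp (h i * t) - 1) / h i\<bar> \<le> w v t * (t * exp (Bd * t))"
        using t0 by (intro mult_mono) (auto simp: w_def)
      also have "\<dots> = dom t"
        using t0 by (simp add: w_def dom_def powr_add exp_add[symmetric] algebra_simps)
      finally show ?thesis by (simp add: fk_eq abs_mult)
    qed
    have conv: "(\<lambda>i. fk i t) \<longlonglongrightarrow> g t" if t: "t \<in> {0<..}" for t
    proof -
      have "(\<lambda>i. w v t * ((exp (h i * t) - 1) / h i)) \<longlonglongrightarrow> w v t * t"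
        by (intro tendsto_mult tendsto_const quot_lim h0 hne)
      moreover have "w v t * t = g t"
        using t by (simp add: w_def g_def q_def powr_add algebra_simps)
      ultimately show ?thesis by (simp add: fk_eq)
    qed
    have lim: "(\<lambda>i. integral {0<..} (fk i)) \<longlonglongrightarrow> integral {0<..} g"
      by (rule dominated_convergence(2)[OF _ dom_int bound conv])
         (use fk_int in \<open>auto simp: integrable_on_def\<close>)
    show "((\<lambda>y. (Jf p n y - Jf p n v) / (y - v)) \<circ> X) \<longlonglongrightarrow> Jf p (Suc n) v"
    proof -
      have "integral {0<..} (fk i) = (Jf p n (X i) - Jf p n v) / (X i - v)" for i
        using fk_int[of i] by (rule integral_unique)
      then show ?thesis using \<open>(\<lambda>i. integral {0<..} (fk i)) \<longlonglongrightarrow> integral {0<..} g\<close>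
        by (simp add: o_def Jg)
    qed
  qed
  then show ?thesis by (simp add: has_field_derivative_iff)
qed



lemma int_pos_interval:
  fixes f :: "real \<Rightarrow> real"
  assumes "a < b" "continuous_on {a..b} f" "\<And>x. x \<in> {a..b} \<Longrightarrow> f x > 0"
  shows "integral {a..b} f > 0"
proof -
  obtain xm where xm: "xm \<in> {a..b}" "\<And>y. y \<in> {a..b} \<Longrightarrow> f xm \<le> f y"
    using continuous_attains_inf[OF compact_Icc _ assms(2)] assms(1) by auto
  have m: "f xm > 0" using assms(3) xm(1) by simp
  have "integral {a..b} (\<lambda>x. f xm) \<le> integral {a..b} f"
    by (rule integral_le) (use integrable_continuous_interval[OF assms(2)] xm in auto)
  moreover have "integral {a..b} (\<lambda>x. f xm) = (b - a) * f xm" using assms(1) by simp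
  moreover have "(b - a) * f xm > 0" using assms(1) m by simp
  ultimately show ?thesis by linarith
qed

lemma int_pos_Ioi:
  fixes f :: "real \<Rightarrow> real"
  assumes "f integrable_on {0<..}" "\<And>t. t > 0 \<Longrightarrow> f t \<ge> 0" "0 < a" "a < b"
    "continuous_on {a..b} f" "\<And>x. x \<in> {a..b} \<Longrightarrow> f x > 0"
  shows "integral {0<..} f > 0"
proof -
  have "integral {a..b} f \<le> integral {0<..} f"
    by (rule integral_subset_le) (use assms integrable_continuous_interval[OF assms(5)] in auto)
  moreover have "integral {a..b} f > 0" by (rule int_pos_interval) (use assms in auto)
  ultimately show ?thesis by simp
qed

lemma Jf_pos: assumes "p > -1" shows "Jf p n v > 0"
  unfolding Jf_def
proof (rule int_pos_Ioi[of _ 1 2])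
  show "(\<lambda>t. t powr (p + real n) * exp (- t\<^sup>2 / 2 + v * t)) integrable_on {0<..}"
    by (rule w_integrable) (use assms in simp)
  show "continuous_on {1..2} (\<lambda>t. t powr (p + real n) * exp (- t\<^sup>2 / 2 + v * t))"
    by (intro continuous_intros) auto
qed auto

lemma powr_split: "t > 0 \<Longrightarrow> t powr (p + real k) = t powr p * t ^ k"
  by (simp add: powr_add powr_realpow)

lemma Jf_lc: assumes p: "p > -1" shows "(Jf p 1 v)\<^sup>2 < Jf p 0 v * Jf p 2 v"
proof -
  define w where "w k t = t powr (p + real k) * exp (- t\<^sup>2 / 2 + v * t)" for k :: nat and t :: real
  define J where "J k = Jf p k v" for k
  have wi: "(w k has_integral J k) {0<..}" for k
    unfolding w_def[abs_def] J_def Jf_def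
    by (rule integrable_integral[OF w_integrable]) (use p in simp)
  have J0: "J 0 > 0" using Jf_pos[OF p] by (simp add: J_def)
  define l where "l = J 1 / J 0"
  define u where "u t = w 0 t * (t - l)\<^sup>2" for t
  have ueq: "w 2 t - 2 * l * w 1 t + l\<^sup>2 * w 0 t = u t" if "t \<in> {0<..}" for t
  proof -
    have t: "t > 0" using that by simp
    have "w k t = t powr p * t ^ k * exp (- t\<^sup>2 / 2 + v * t)" for k
      using powr_split[OF t, of p k] by (simp add: w_def)
    then show ?thesis by (simp add: u_def power2_eq_square algebra_simps)
  qed
  have "((\<lambda>t. w 2 t - 2 * l * w 1 t + l\<^sup>2 * w 0 t) has_integral (J 2 - 2 * l * J 1 + l\<^sup>2 * J 0)) {0<..}"
    by (intro has_integral_add has_integral_diff has_integral_mult_right wi)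
  then have ui: "(u has_integral (J 2 - 2 * l * J 1 + l\<^sup>2 * J 0)) {0<..}"
    by (rule has_integral_eq[OF ueq, rotated])
  have "integral {0<..} u > 0"
  proof (rule int_pos_Ioi[of _ "\<bar>l\<bar> + 1" "\<bar>l\<bar> + 2"])
    show "u integrable_on {0<..}" using ui by (auto simp: integrable_on_def)
    show "continuous_on {\<bar>l\<bar> + 1..\<bar>l\<bar> + 2} u"
      unfolding u_def w_def by (intro continuous_intros) auto
    show "0 \<le> u t" if "t > 0" for t using that by (simp add: u_def w_def)
    fix x assume x: "x \<in> {\<bar>l\<bar> + 1..\<bar>l\<bar> + 2}"
    then have "x > 0" "x - l \<noteq> 0" by auto
    then show "u x > 0" by (simp add: u_def w_def)
  qed auto
  then have "J 2 - 2 * l * J 1 + l\<^sup>2 * J 0 > 0" using integral_unique[OF ui] by simp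
  then have "J 2 - (J 1)\<^sup>2 / J 0 > 0" using J0 by (simp add: l_def power2_eq_square field_simps)
  then have "J 0 * J 2 - (J 1)\<^sup>2 > 0" using J0 by (simp add: field_simps)
  then show ?thesis by (simp add: J_def)
qed

lemma psi_eq:
  fixes a b \<sigma> \<rho> :: real
  assumes b: "b > 0" and s: "\<sigma> > 0"
  shows "psi a b \<sigma> \<rho> x = Jf (\<rho> / b - 1) 0 ((b * x - a) / (\<sigma> * b) * sqrt (2 * b)) / Gamma (\<rho> / b)"
proof -
  define L where "L = (b * x - a) / (\<sigma> * b) * sqrt (2 * b)"
  define u where "u = - (b * x - a) / (\<sigma> * b) * sqrt (2 * b)"
  define A where "A = (b * x - a)\<^sup>2 / (2 * \<sigma>\<^sup>2 * b)"
  have uL: "u = - L" unfolding u_def L_def by (simp add: divide_inverse algebra_simps)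
  have s2: "(sqrt (2 * b))\<^sup>2 = 2 * b" using b by simp
  have sq: "u\<^sup>2 / 4 = A"
  proof -
    have "u\<^sup>2 = L\<^sup>2" by (simp add: uL)
    also have "L\<^sup>2 = ((b * x - a) / (\<sigma> * b))\<^sup>2 * (sqrt (2 * b))\<^sup>2"
      unfolding L_def by (rule power_mult_distrib)
    also have "\<dots> = ((b * x - a) / (\<sigma> * b))\<^sup>2 * (2 * b)" by (simp add: s2)
    finally have U: "u\<^sup>2 = ((b * x - a) / (\<sigma> * b))\<^sup>2 * (2 * b)" .
    have "((b * x - a) / (\<sigma> * b))\<^sup>2 * (2 * b) / 4 = (b * x - a)\<^sup>2 / (2 * \<sigma>\<^sup>2 * b)"
      using b s by (simp add: power_divide power_mult_distrib field_simps power2_eq_square)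
    then show ?thesis using U by (simp add: A_def)
  qed
  have int: "integral {0<..} (\<lambda>t. t powr (- (- \<rho> / b) - 1) * exp (- t\<^sup>2 / 2 - u * t))
      = Jf (\<rho> / b - 1) 0 L"
    unfolding Jf_def by (rule arg_cong[where f="integral {0<..}"]) (auto simp: uL)
  have "psi a b \<sigma> \<rho> x = exp A * (exp (- u\<^sup>2 / 4) / Gamma (\<rho> / b) * Jf (\<rho> / b - 1) 0 L)"
    unfolding psi_def parab_D_def int[symmetric] by (simp add: A_def u_def)
  also have "exp (- u\<^sup>2 / 4) = exp (- A)" using sq by simp
  also have "exp A * (exp (- A) / Gamma (\<rho> / b) * Jf (\<rho> / b - 1) 0 L) = Jf (\<rho> / b - 1) 0 L / Gamma (\<rho> / b)"
    by (simp add: exp_minus field_simps)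
  finally show ?thesis by (simp add: L_def)
qed

lemma psid_eq:
  fixes a b \<sigma> \<rho> :: real
  assumes b: "b > 0" and s: "\<sigma> > 0" and r: "\<rho> > 0"
  defines "k \<equiv> sqrt (2 * b) / \<sigma>" and "d \<equiv> - (a / (\<sigma> * b)) * sqrt (2 * b)"
  shows "psid n a b \<sigma> \<rho> = (\<lambda>x. k ^ n * Jf (\<rho> / b - 1) n (k * x + d) / Gamma (\<rho> / b))"
proof (induction n)
  case 0
  have "(b * x - a) / (\<sigma> * b) * sqrt (2 * b) = k * x + d" for x
    using b s by (simp add: k_def d_def field_simps)
  then show ?case by (auto simp: psid_def psi_eq[OF b s] intro!: ext)
next
  case (Suc n)
  have p: "\<rho> / b - 1 > -1" using b r by simp
  have "psid (Suc n) a b \<sigma> \<rho> = deriv (psid n a b \<sigma> \<rho>)" by (simp add: psid_def)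
  also have "\<dots> = (\<lambda>x. k ^ Suc n * Jf (\<rho> / b - 1) (Suc n) (k * x + d) / Gamma (\<rho> / b))"
  proof (rule ext)
    fix x
    have "((\<lambda>x. Jf (\<rho> / b - 1) n (k * x + d)) has_real_derivative Jf (\<rho> / b - 1) (Suc n) (k * x + d) * k) (at x)"
      by (rule DERIV_chain2[OF Jf_deriv[OF p]]) (auto intro!: derivative_eq_intros)
    from DERIV_cdivide[OF DERIV_cmult[OF this, of "k ^ n"], of "Gamma (\<rho> / b)"]
    have "((\<lambda>x. k ^ n * Jf (\<rho> / b - 1) n (k * x + d) / Gamma (\<rho> / b)) has_real_derivative
        k ^ Suc n * Jf (\<rho> / b - 1) (Suc n) (k * x + d) / Gamma (\<rho> / b)) (at x)"
      by (simp add: algebra_simps)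
    then show "deriv (psid n a b \<sigma> \<rho>) x = k ^ Suc n * Jf (\<rho> / b - 1) (Suc n) (k * x + d) / Gamma (\<rho> / b)"
      unfolding Suc by (rule DERIV_imp_deriv)
  qed
  finally show ?case .
qed



theorem proposition4p7:
  fixes a b \<sigma> \<rho> c \<alpha> :: real
  assumes "b > 0" and "\<sigma> > 0" and "\<rho> > 0" and "c > 0" and "\<alpha> > 0"
  defines "F \<equiv> Ffun a b \<sigma> \<rho> c \<alpha>"
    and "xi \<equiv> xinf_pt a b \<sigma> \<rho> c"
    and "xo \<equiv> x0_pt a b \<sigma> \<rho> c"
  shows "(\<forall>x y. xi < x \<longrightarrow> x < y \<longrightarrow> y < xo \<longrightarrow> F y < F x) \<and>
         (\<exists>Fd :: nat \<Rightarrow> real \<Rightarrow> real. Fd 0 = F \<and>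
           (\<forall>n. \<forall>x\<in>{xi<..xo}. (Fd n has_real_derivative Fd (Suc n) x) (at x within {xi<..xo}))) \<and>
         filterlim F at_top (at_right xi) \<and>
         filterlim (deriv F) at_bot (at_right xi)"
proof -
  have b: "b > 0" and s: "\<sigma> > 0" and rh: "\<rho> > 0" using assms by auto
  define k where "k = sqrt (2 * b) / \<sigma>"
  define d where "d = - (a / (\<sigma> * b)) * sqrt (2 * b)"
  define p where "p = \<rho> / b - 1"
  define g where "g = Gamma (\<rho> / b)"
  have p: "p > -1" using b rh by (simp add: p_def)
  have k: "k > 0" using b s by (simp add: k_def)
  have g: "g > 0" using b rh by (simp add: g_def)
  have pe: "psid n a b \<sigma> \<rho> = (\<lambda>x. k ^ n * Jf p n (k * x + d) / g)" for n
    unfolding k_def d_def p_def g_def by (rule psid_eq[OF b s rh])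
  have hD: "(psid n a b \<sigma> \<rho> has_real_derivative psid (Suc n) a b \<sigma> \<rho> x) (at x)" for n x
  proof -
    have "((\<lambda>x. Jf p n (k * x + d)) has_real_derivative Jf p (Suc n) (k * x + d) * k) (at x)"
      by (rule DERIV_chain2[OF Jf_deriv[OF p]]) (auto intro!: derivative_eq_intros)
    from DERIV_cdivide[OF DERIV_cmult[OF this, of "k ^ n"], of g]
    show ?thesis unfolding pe by (simp add: algebra_simps)
  qed
  have hpos: "psid n a b \<sigma> \<rho> x > 0" for n x
    unfolding pe using k g Jf_pos[OF p] by simp
  have hlc: "psid 2 a b \<sigma> \<rho> x * psid 0 a b \<sigma> \<rho> x - (psid 1 a b \<sigma> \<rho> x)\<^sup>2 > 0" for x
  proof -
    define v where "v = k * x + d"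
    have "k\<^sup>2 / g\<^sup>2 * (Jf p 1 v)\<^sup>2 < k\<^sup>2 / g\<^sup>2 * (Jf p 0 v * Jf p 2 v)"
      by (rule mult_strict_left_mono[OF Jf_lc[OF p]]) (use k g in simp)
    then show ?thesis unfolding pe v_def[symmetric]
      by (simp add: power2_eq_square field_simps)
  qed
  interpret psi_ctx "\<lambda>n. psid n a b \<sigma> \<rho>" c \<alpha>
    by unfold_locales (use hD hpos hlc assms in auto)
  have e0: "x0_pt a b \<sigma> \<rho> c = r 0"
    unfolding x0_pt_def r_def gn_def by simp
  have e1: "xinf_pt a b \<sigma> \<rho> c = r 1"
    unfolding xinf_pt_def r_def gn_def by (simp add: numeral_2_eq_2)
  have eT: "Theta a b \<sigma> \<rho> c \<alpha> = Th"
    by (rule ext) (simp add: Theta_def Th_def Let_def)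
  have eF: "Ffun a b \<sigma> \<rho> c \<alpha> = Fn"
    by (rule ext) (simp add: Ffun_def Fn_def eT e0)
  show ?thesis unfolding F_def xi_def xo_def eF e0 e1 by (rule main_loc)
qed


end
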